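(* The group $G=\mathrm{SL}_3(\mathbb F_2)$ realizes $\langle 8,7,7\rangle$ via a TPP triple of subgroups, and consequently $\beta(\mathrm{SL}_3(\mathbb F_2))\ge 392=\frac{7}{3}|\mathrm{SL}_3(\mathbb F_2)|$.
   Context: For a nonempty subset $X$ of a group $G$, $Q(X):=\{xy^{-1}: x,y\in X\}$. Nonempty subsets $S_1,S_2,S_3$ of $G$ satisfy the Triple Product Property (TPP) if for all $s_i\in Q(S_i)$: $s_1s_2s_3=1$ iff $s_1=s_2=s_3=1$. A group $G$ realizes $\langle n,p,m\rangle$ if there are subsets $S_1,S_2,S_3\subseteq G$ with $|S_1|=n$, $|S_2|=p$, $|S_3|=m$ satisfying the TPP; it does so via a TPP triple of subgroups if the $S_i$ can be chosen to be subgroups. For a nontrivial finite group $G$, $\beta(G):=\max\{npm : G \text{ realizes } \langle n,p,m\rangle\}$. Here $|\mathrm{SL}_3(\mathbb F_2)|=168$. *)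

theory Defs
  imports "HOL-Analysis.Analysis" "HOL-Algebra.Group" "HOL-Library.Z2"
begin

definition Qset :: "('a, 'b) monoid_scheme \<Rightarrow> 'a set \<Rightarrow> 'a set" where
  "Qset G X = {x \<otimes>\<^bsub>G\<^esub> inv\<^bsub>G\<^esub> y | x y. x \<in> X \<and> y \<in> X}"

definition TPP :: "('a, 'b) monoid_scheme \<Rightarrow> 'a set \<Rightarrow> 'a set \<Rightarrow> 'a set \<Rightarrow> bool" where
  "TPP G S1 S2 S3 \<longleftrightarrow>
     S1 \<noteq> {} \<and> S2 \<noteq> {} \<and> S3 \<noteq> {} \<and>
     S1 \<subseteq> carrier G \<and> S2 \<subseteq> carrier G \<and> S3 \<subseteq> carrier G \<and>
     (\<forall>s1\<in>Qset G S1. \<forall>s2\<in>Qset G S2. \<forall>s3\<in>Qset G S3.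
        (s1 \<otimes>\<^bsub>G\<^esub> s2 \<otimes>\<^bsub>G\<^esub> s3 = \<one>\<^bsub>G\<^esub>) \<longleftrightarrow>
        (s1 = \<one>\<^bsub>G\<^esub> \<and> s2 = \<one>\<^bsub>G\<^esub> \<and> s3 = \<one>\<^bsub>G\<^esub>))"

definition realizes :: "('a, 'b) monoid_scheme \<Rightarrow> nat \<Rightarrow> nat \<Rightarrow> nat \<Rightarrow> bool" where
  "realizes G n p m \<longleftrightarrow>
     (\<exists>S1 S2 S3. card S1 = n \<and> card S2 = p \<and> card S3 = m \<and> TPP G S1 S2 S3)"

definition realizes_subgroups :: "('a, 'b) monoid_scheme \<Rightarrow> nat \<Rightarrow> nat \<Rightarrow> nat \<Rightarrow> bool" where
  "realizes_subgroups G n p m \<longleftrightarrow>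
     (\<exists>S1 S2 S3. subgroup S1 G \<and> subgroup S2 G \<and> subgroup S3 G \<and>
        card S1 = n \<and> card S2 = p \<and> card S3 = m \<and> TPP G S1 S2 S3)"

definition beta :: "('a, 'b) monoid_scheme \<Rightarrow> nat" where
  "beta G = Max {n * p * m | n p m. realizes G n p m}"

definition SL3F2 :: "(bit ^ 3 ^ 3) monoid" where
  "SL3F2 = \<lparr>carrier = {A. det A = 1}, mult = (\<lambda>A B. A ** B), one = mat 1\<rparr>"

end

theory Submission imports Defs begin

lemma bit01: "(x::bit) = 0 \<or> x = 1"
  using bit_not_zero_iff by blast

definition B :: "bool \<Rightarrow> bit" where "B a = (if a then 1 else 0)"

lemma B_add: "B a + B b = B (a \<noteq> b)" by (auto simp: B_def)
lemma B_mul: "B a * B b = B (a \<and> b)" by (auto simp: B_def)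
lemma B_minus: "B a - B b = B (a \<noteq> b)" by (auto simp: B_def)
lemma B_eq: "(B a = B b) = (a = b)" by (auto simp: B_def)
lemma B_1: "B a = 1 \<longleftrightarrow> a" by (auto simp: B_def)
lemma B_self: "B (x = 1) = x" using bit_not_zero_iff[of x] by (auto simp: B_def)

definition pos :: "3 \<Rightarrow> nat" where
  "pos i = (if i = 1 then 0 else if i = 2 then 1 else 2)"

definition mk :: "bool list \<Rightarrow> bit^3^3" where
  "mk l = (\<chi> i j. B (l ! (3 * pos i + pos j)))"

lemma pos_simps[simp]: "pos 1 = 0" "pos 2 = 1" "pos 3 = 2"
  by (simp_all add: pos_def)

lemma mk_nth: "mk l $ i $ j = B (l ! (3 * pos i + pos j))"
  by (simp add: mk_def)

lemma mk_entries:
  "mk l $ 1 $ 1 = B (l ! 0)"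
  "mk l $ 1 $ 2 = B (l ! 1)"
  "mk l $ 1 $ 3 = B (l ! 2)"
  "mk l $ 2 $ 1 = B (l ! 3)"
  "mk l $ 2 $ 2 = B (l ! 4)"
  "mk l $ 2 $ 3 = B (l ! 5)"
  "mk l $ 3 $ 1 = B (l ! 6)"
  "mk l $ 3 $ 2 = B (l ! 7)"
  "mk l $ 3 $ 3 = B (l ! 8)"
  by (simp_all add: mk_nth numeral_2_eq_2)

definition mulL :: "bool list \<Rightarrow> bool list \<Rightarrow> bool list" where
  "mulL l m = [(((l!0 \<and> m!0) \<noteq> (l!1 \<and> m!3)) \<noteq> (l!2 \<and> m!6)),
    (((l!0 \<and> m!1) \<noteq> (l!1 \<and> m!4)) \<noteq> (l!2 \<and> m!7)),
    (((l!0 \<and> m!2) \<noteq> (l!1 \<and> m!5)) \<noteq> (l!2 \<and> m!8)),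
    (((l!3 \<and> m!0) \<noteq> (l!4 \<and> m!3)) \<noteq> (l!5 \<and> m!6)),
    (((l!3 \<and> m!1) \<noteq> (l!4 \<and> m!4)) \<noteq> (l!5 \<and> m!7)),
    (((l!3 \<and> m!2) \<noteq> (l!4 \<and> m!5)) \<noteq> (l!5 \<and> m!8)),
    (((l!6 \<and> m!0) \<noteq> (l!7 \<and> m!3)) \<noteq> (l!8 \<and> m!6)),
    (((l!6 \<and> m!1) \<noteq> (l!7 \<and> m!4)) \<noteq> (l!8 \<and> m!7)),
    (((l!6 \<and> m!2) \<noteq> (l!7 \<and> m!5)) \<noteq> (l!8 \<and> m!8))]"

lemma mulL_nth:
  "mulL l m ! 0 = (((l!0 \<and> m!0) \<noteq> (l!1 \<and> m!3)) \<noteq> (l!2 \<and> m!6))"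
  "mulL l m ! 1 = (((l!0 \<and> m!1) \<noteq> (l!1 \<and> m!4)) \<noteq> (l!2 \<and> m!7))"
  "mulL l m ! 2 = (((l!0 \<and> m!2) \<noteq> (l!1 \<and> m!5)) \<noteq> (l!2 \<and> m!8))"
  "mulL l m ! 3 = (((l!3 \<and> m!0) \<noteq> (l!4 \<and> m!3)) \<noteq> (l!5 \<and> m!6))"
  "mulL l m ! 4 = (((l!3 \<and> m!1) \<noteq> (l!4 \<and> m!4)) \<noteq> (l!5 \<and> m!7))"
  "mulL l m ! 5 = (((l!3 \<and> m!2) \<noteq> (l!4 \<and> m!5)) \<noteq> (l!5 \<and> m!8))"
  "mulL l m ! 6 = (((l!6 \<and> m!0) \<noteq> (l!7 \<and> m!3)) \<noteq> (l!8 \<and> m!6))"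
  "mulL l m ! 7 = (((l!6 \<and> m!1) \<noteq> (l!7 \<and> m!4)) \<noteq> (l!8 \<and> m!7))"
  "mulL l m ! 8 = (((l!6 \<and> m!2) \<noteq> (l!7 \<and> m!5)) \<noteq> (l!8 \<and> m!8))"
  by (simp_all add: mulL_def)


definition detL :: "bool list \<Rightarrow> bool" where
  "detL l = (((((((l!0 \<and> l!4) \<and> l!8) \<noteq> ((l!1 \<and> l!5) \<and> l!6)) \<noteq> ((l!2 \<and> l!3) \<and> l!7)) \<noteq> ((l!0 \<and> l!5) \<and> l!7)) \<noteq> ((l!1 \<and> l!3) \<and> l!8)) \<noteq> ((l!2 \<and> l!4) \<and> l!6))"

lemma mk_mul: "mk (mulL l m) = mk l ** mk m"
  unfolding vec_eq_iff forall_3 matrix_matrix_mult_def sum_3 mk_entries vec_lambda_beta mulL_nth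
  by (simp only: B_add B_mul B_eq simp_thms)

lemma det_mk: "det (mk l) = B (detL l)"
  unfolding det_3 mk_entries detL_def by (simp only: B_add B_mul B_minus)

definition unmk :: "bit^3^3 \<Rightarrow> bool list" where
  "unmk A = [A$1$1 = 1, A$1$2 = 1, A$1$3 = 1, A$2$1 = 1, A$2$2 = 1, A$2$3 = 1, A$3$1 = 1, A$3$2 = 1, A$3$3 = 1]"

lemma mk_unmk: "mk (unmk A) = A"
  unfolding vec_eq_iff forall_3 mk_entries unmk_def by (simp add: B_self)

lemma unmk_mk: "unmk (mk l) = [l!0,l!1,l!2,l!3,l!4,l!5,l!6,l!7,l!8]"
  unfolding unmk_def mk_entries by (simp only: B_1)

lemma len9: "length l = 9 \<Longrightarrow> l = [l!0,l!1,l!2,l!3,l!4,l!5,l!6,l!7,l!8]"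
  by (auto simp: numeral_eq_Suc length_Suc_conv)

lemma mk_inj: "length l = 9 \<Longrightarrow> length m = 9 \<Longrightarrow> mk l = mk m \<Longrightarrow> l = m"
  by (metis len9 unmk_mk)

definition allL :: "bool list list" where "allL = List.n_lists 9 [False, True]"

lemma len_allL: "l \<in> set allL \<Longrightarrow> length l = 9"
  by (simp add: allL_def set_n_lists)

lemma carrier_eq: "carrier SL3F2 = mk ` set (filter detL allL)"
proof
  show "carrier SL3F2 \<subseteq> mk ` set (filter detL allL)"
  proof
    fix A assume "A \<in> carrier SL3F2"
    hence "det A = 1" by (simp add: SL3F2_def)
    hence "det (mk (unmk A)) = 1" by (simp only: mk_unmk)
    hence "detL (unmk A)" by (simp only: det_mk B_1)
    moreover have "unmk A \<in> set allL" by (simp add: allL_def set_n_lists unmk_def bit01)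
    ultimately show "A \<in> mk ` set (filter detL allL)"
      by (intro image_eqI[of _ _ "unmk A"]) (simp_all only: mk_unmk set_filter mem_Collect_eq simp_thms)
  qed
next
  show "mk ` set (filter detL allL) \<subseteq> carrier SL3F2"
    by (auto simp: SL3F2_def det_mk B_1)
qed

lemma card_carrier: "card (carrier SL3F2) = 168"
proof -
  have "inj_on mk (set (filter detL allL))"
    by (rule inj_onI) (auto intro: mk_inj len_allL)
  hence "card (carrier SL3F2) = card (set (filter detL allL))"
    by (simp add: carrier_eq card_image)
  also have "\<dots> = length (filter detL allL)"
    unfolding allL_def by (intro distinct_card distinct_filter distinct_n_lists) simp
  also have "\<dots> = 168" unfolding allL_def by code_simp
  finally show ?thesis .
qed

definition idL :: "bool list" where "idL = [True, False, False, False, True, False, False, False, True]"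

lemma mk_idL: "mk idL = mat 1"
  unfolding vec_eq_iff forall_3 mk_entries idL_def by (simp add: mat_def B_def)

lemma len_mulL: "length (mulL l m) = 9"
  by (simp add: mulL_def)

lemma SL_simps: "carrier SL3F2 = {A. det A = 1}" "x \<otimes>\<^bsub>SL3F2\<^esub> y = x ** y" "\<one>\<^bsub>SL3F2\<^esub> = mat 1"
  by (simp_all add: SL3F2_def)

lemma group_SL: "group SL3F2"
proof (rule groupI)
  fix x assume x: "x \<in> carrier SL3F2"
  hence "det x \<noteq> 0" by (simp add: SL_simps)
  hence "invertible x" by (simp add: invertible_det_nz)
  then obtain y where y: "y ** x = mat 1" using invertible_left_inverse by blast
  hence "det y * det x = 1" by (metis det_mul det_I)
  hence "det y = 1" using x by (simp add: SL_simps)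
  thus "\<exists>y\<in>carrier SL3F2. y \<otimes>\<^bsub>SL3F2\<^esub> x = \<one>\<^bsub>SL3F2\<^esub>" using y by (auto simp: SL_simps)
qed (auto simp: SL_simps det_mul matrix_mul_assoc)

lemma mk_in_carrier: "detL l \<Longrightarrow> mk l \<in> carrier SL3F2"
  by (simp add: SL_simps det_mk B_1)

lemma sub_from_list:
  assumes d: "\<forall>x\<in>set L. detL x \<and> length x = 9" and ne: "L \<noteq> []"
    and cl: "\<forall>x\<in>set L. \<forall>y\<in>set L. mulL x y \<in> set L"
    and iv: "\<forall>x\<in>set L. \<exists>y\<in>set L. mulL y x = idL"
  shows "subgroup (mk ` set L) SL3F2"
proof (rule group.subgroupI[OF group_SL])
  show "mk ` set L \<subseteq> carrier SL3F2" using d mk_in_carrier by auto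
  show "mk ` set L \<noteq> {}" using ne by simp
next
  fix a assume "a \<in> mk ` set L"
  then obtain x where x: "x \<in> set L" "a = mk x" by auto
  then obtain y where y: "y \<in> set L" "mulL y x = idL" using iv by blast
  have "mk y \<otimes>\<^bsub>SL3F2\<^esub> mk x = \<one>\<^bsub>SL3F2\<^esub>"
    using y by (simp add: SL_simps mk_mul[symmetric] mk_idL)
  hence "inv\<^bsub>SL3F2\<^esub> (mk x) = mk y"
    using group.inv_equality[OF group_SL] d x y mk_in_carrier by blast
  thus "inv\<^bsub>SL3F2\<^esub> a \<in> mk ` set L" using x y by auto
next
  fix a b assume "a \<in> mk ` set L" "b \<in> mk ` set L"
  then obtain x y where "x \<in> set L" "y \<in> set L" "a = mk x" "b = mk y" by auto
  thus "a \<otimes>\<^bsub>SL3F2\<^esub> b \<in> mk ` set L" using cl by (auto simp: SL_simps mk_mul[symmetric])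
qed

lemma card_from_list:
  assumes "\<forall>x\<in>set L. length x = 9" "distinct L"
  shows "card (mk ` set L) = length L"
proof -
  have "inj_on mk (set L)" by (rule inj_onI) (use assms mk_inj in blast)
  thus ?thesis by (simp add: card_image distinct_card assms)
qed

lemma Qset_sub:
  assumes "subgroup S SL3F2" shows "Qset SL3F2 S = S"
proof -
  interpret group SL3F2 by (rule group_SL)
  show ?thesis
  proof
    show "Qset SL3F2 S \<subseteq> S" unfolding Qset_def
      using assms subgroup.m_closed subgroup.m_inv_closed by fastforce
    show "S \<subseteq> Qset SL3F2 S" unfolding Qset_def
    proof
      fix x assume "x \<in> S"
      moreover have "x = x \<otimes>\<^bsub>SL3F2\<^esub> inv\<^bsub>SL3F2\<^esub> \<one>\<^bsub>SL3F2\<^esub>"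
        using \<open>x \<in> S\<close> assms subgroup.subset by fastforce
      moreover have "\<one>\<^bsub>SL3F2\<^esub> \<in> S" using assms subgroup.one_closed by blast
      ultimately show "x \<in> {x \<otimes>\<^bsub>SL3F2\<^esub> inv\<^bsub>SL3F2\<^esub> y | x y. x \<in> S \<and> y \<in> S}" by blast
    qed
  qed
qed

definition LU :: "bool list list" where "LU = [[True, False, False, False, True, False, False, False, True], [True, False, False, False, True, True, False, False, True], [True, False, True, False, True, False, False, False, True], [True, False, True, False, True, True, False, False, True], [True, True, False, False, True, False, False, False, True], [True, True, False, False, True, True, False, False, True], [True, True, True, False, True, False, False, False, True], [True, True, True, False, True, True, False, False, True]]"

definition LC :: "bool list list" where "LC = [[False, False, True, True, False, True, False, True, False], [False, True, False, False, True, True, True, False, True], [False, True, True, True, True, False, True, True, True], [True, False, False, False, True, False, False, False, True], [True, False, True, True, True, True, False, True, True], [True, True, False, False, False, True, True, False, False], [True, True, True, True, False, False, True, True, False]]"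

definition LD :: "bool list list" where "LD = [[False, False, True, True, False, True, True, True, True], [False, True, False, False, False, True, True, False, True], [False, True, True, True, False, False, False, True, False], [True, False, False, False, True, False, False, False, True], [True, False, True, True, True, True, True, True, False], [True, True, False, False, True, True, True, False, False], [True, True, True, True, True, False, False, True, True]]"


lemma facts_U: "\<forall>x\<in>set LU. detL x \<and> length x = 9" "LU \<noteq> []"
  "\<forall>x\<in>set LU. \<forall>y\<in>set LU. mulL x y \<in> set LU"
  "\<forall>x\<in>set LU. \<exists>y\<in>set LU. mulL y x = idL" "distinct LU" "length LU = 8"
  by code_simp+

lemma facts_C: "\<forall>x\<in>set LC. detL x \<and> length x = 9" "LC \<noteq> []"
  "\<forall>x\<in>set LC. \<forall>y\<in>set LC. mulL x y \<in> set LC"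
  "\<forall>x\<in>set LC. \<exists>y\<in>set LC. mulL y x = idL" "distinct LC" "length LC = 7"
  by code_simp+

lemma facts_D: "\<forall>x\<in>set LD. detL x \<and> length x = 9" "LD \<noteq> []"
  "\<forall>x\<in>set LD. \<forall>y\<in>set LD. mulL x y \<in> set LD"
  "\<forall>x\<in>set LD. \<exists>y\<in>set LD. mulL y x = idL" "distinct LD" "length LD = 7"
  by code_simp+

lemma facts_TPP: "\<forall>x\<in>set LU. \<forall>y\<in>set LC. \<forall>z\<in>set LD.
    mulL (mulL x y) z = idL \<longrightarrow> x = idL \<and> y = idL \<and> z = idL"
  by code_simp

lemma TPP_main: "TPP SL3F2 (mk ` set LU) (mk ` set LC) (mk ` set LD)"
proof -
  have sU: "subgroup (mk ` set LU) SL3F2" using facts_U by (intro sub_from_list)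
  have sC: "subgroup (mk ` set LC) SL3F2" using facts_C by (intro sub_from_list)
  have sD: "subgroup (mk ` set LD) SL3F2" using facts_D by (intro sub_from_list)
  have key: "mk x ** mk y ** mk z = mat 1 \<Longrightarrow> x \<in> set LU \<Longrightarrow> y \<in> set LC \<Longrightarrow> z \<in> set LD
      \<Longrightarrow> mk x = mat 1 \<and> mk y = mat 1 \<and> mk z = mat 1" for x y z
  proof -
    assume h: "mk x ** mk y ** mk z = mat 1" "x \<in> set LU" "y \<in> set LC" "z \<in> set LD"
    hence "mk (mulL (mulL x y) z) = mk idL" by (simp add: mk_mul mk_idL)
    moreover have "length idL = 9" by (simp add: idL_def)
    ultimately have "mulL (mulL x y) z = idL" using mk_inj len_mulL by blast
    thus ?thesis using facts_TPP h mk_idL by blast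
  qed
  show ?thesis
    unfolding TPP_def Qset_sub[OF sU] Qset_sub[OF sC] Qset_sub[OF sD]
    using subgroup.subset[OF sU] subgroup.subset[OF sC] subgroup.subset[OF sD]
      facts_U(2) facts_C(2) facts_D(2)
    by (auto simp: SL_simps dest: key)
qed

theorem mainTheorem7:
  shows "realizes_subgroups SL3F2 8 7 7 \<and> beta SL3F2 \<ge> 392 \<and>
         real 392 = 7 / 3 * real (card (carrier SL3F2))"
proof -
  have sU: "subgroup (mk ` set LU) SL3F2" using facts_U by (intro sub_from_list)
  have sC: "subgroup (mk ` set LC) SL3F2" using facts_C by (intro sub_from_list)
  have sD: "subgroup (mk ` set LD) SL3F2" using facts_D by (intro sub_from_list)
  have cU: "card (mk ` set LU) = 8" using facts_U card_from_list by metis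
  have cC: "card (mk ` set LC) = 7" using facts_C card_from_list by metis
  have cD: "card (mk ` set LD) = 7" using facts_D card_from_list by metis
  have R: "realizes_subgroups SL3F2 8 7 7"
    unfolding realizes_subgroups_def using sU sC sD cU cC cD TPP_main by blast
  hence "realizes SL3F2 8 7 7" unfolding realizes_subgroups_def realizes_def by blast
  hence in392: "392 \<in> {n * p * m | n p m. realizes SL3F2 n p m}" by force
  have fin: "finite (carrier SL3F2)" using card_carrier by (intro card_ge_0_finite) simp
  have bnd: "{n * p * m | n p m. realizes SL3F2 n p m} \<subseteq> {..168*168*168}"
  proof
    fix k assume "k \<in> {n * p * m | n p m. realizes SL3F2 n p m}"
    then obtain n p m S1 S2 S3 where k: "k = n * p * m" and S: "card S1 = n" "card S2 = p" "card S3 = m"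
      "TPP SL3F2 S1 S2 S3" unfolding realizes_def by blast
    hence "S1 \<subseteq> carrier SL3F2" "S2 \<subseteq> carrier SL3F2" "S3 \<subseteq> carrier SL3F2"
      unfolding TPP_def by auto
    hence "n \<le> 168" "p \<le> 168" "m \<le> 168" using S card_mono[OF fin] card_carrier by metis+
    hence "n * p * m \<le> 168*168*168" by (intro mult_le_mono) auto
    thus "k \<in> {..168*168*168}" using k by simp
  qed
  have "392 \<le> beta SL3F2" unfolding beta_def
    by (rule Max_ge[OF finite_subset[OF bnd] in392]) simp
  moreover have "real 392 = 7 / 3 * real (card (carrier SL3F2))" by (simp add: card_carrier)
  ultimately show ?thesis using R by simp
qed

end
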